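(* Let $N_k\Rightarrow_{\mathrm{MO}}^* N_{k+l}$ be a sequence of Monadic transformations that removes exactly all occurrences of atoms $P(t_1,\dots,t_n)$ (for a fixed non-monadic $n$-ary predicate $P$) and replaces them by the atoms $T(f_P(t_1,\dots,t_n))$. If $N^\bot_{k+l}$ is a conflicting core of $N_{k+l}$, then there exists a conflicting core of $N_k$.
   Context: First-order logic without equality. A clause is a finite multiset of literals written $\Gamma \rightarrow \Delta$. A Herbrand interpretation is a set of ground atoms; $I \models \Gamma\rightarrow\Delta$ iff for every grounding substitution $\sigma$, $\Delta\sigma\cap I\neq\emptyset$ or $\Gamma\sigma\not\subseteq I$; a clause set is satisfiable if some Herbrand interpretation satisfies all its clauses. A finite clause set $N^\bot$ is a conflicting core if for every substitution $\tau$ grounding all of $N^\bot$ (one substitution for the whole set, so variables are shared among clauses) the set $N^\bot\tau$ is unsatisfiable. $N^\bot$ is a conflicting core of $N$ if moreover every $C\in N^\bot$ equals $C'\sigma$ for some $C'\in N$ and substitution $\sigma$. Monadic transformation: with a fixed monadic predicate $T$ and function symbol $f_P$, both fresh, replace an occurrence of the atom $P(t_1,\dots,t_n)$, $n>1$, in a clause by $T(f_P(t_1,\dots,t_n))$. *)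

theory Defs
  imports Main "HOL-Library.Multiset"
begin

datatype ('f, 'v) fterm = Var 'v | Fun 'f "('f, 'v) fterm list"

datatype ('p, 'f, 'v) atom = Atom 'p "('f, 'v) fterm list"

text \<open>A clause \<open>\<Gamma> \<rightarrow> \<Delta>\<close> is a pair of finite multisets of atoms (antecedent, succedent).\<close>
type_synonym ('p, 'f, 'v) clause = "('p, 'f, 'v) atom multiset \<times> ('p, 'f, 'v) atom multiset"

fun term_vars :: "('f, 'v) fterm \<Rightarrow> 'v set" where
  "term_vars (Var x) = {x}"
| "term_vars (Fun f ts) = (\<Union>t\<in>set ts. term_vars t)"

fun term_funs :: "('f, 'v) fterm \<Rightarrow> 'f set" where
  "term_funs (Var x) = {}"
| "term_funs (Fun f ts) = insert f (\<Union>t\<in>set ts. term_funs t)"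

fun term_subst :: "('v \<Rightarrow> ('f, 'v) fterm) \<Rightarrow> ('f, 'v) fterm \<Rightarrow> ('f, 'v) fterm" where
  "term_subst \<sigma> (Var x) = \<sigma> x"
| "term_subst \<sigma> (Fun f ts) = Fun f (map (term_subst \<sigma>) ts)"

definition ground_term :: "('f, 'v) fterm \<Rightarrow> bool" where
  "ground_term t \<longleftrightarrow> term_vars t = {}"

fun atom_pred :: "('p, 'f, 'v) atom \<Rightarrow> 'p" where
  "atom_pred (Atom p ts) = p"

fun atom_vars :: "('p, 'f, 'v) atom \<Rightarrow> 'v set" where
  "atom_vars (Atom p ts) = (\<Union>t\<in>set ts. term_vars t)"

fun atom_funs :: "('p, 'f, 'v) atom \<Rightarrow> 'f set" where
  "atom_funs (Atom p ts) = (\<Union>t\<in>set ts. term_funs t)"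

fun atom_subst :: "('v \<Rightarrow> ('f, 'v) fterm) \<Rightarrow> ('p, 'f, 'v) atom \<Rightarrow> ('p, 'f, 'v) atom" where
  "atom_subst \<sigma> (Atom p ts) = Atom p (map (term_subst \<sigma>) ts)"

definition ground_atom :: "('p, 'f, 'v) atom \<Rightarrow> bool" where
  "ground_atom A \<longleftrightarrow> atom_vars A = {}"

definition clause_atoms :: "('p, 'f, 'v) clause \<Rightarrow> ('p, 'f, 'v) atom set" where
  "clause_atoms C = set_mset (fst C) \<union> set_mset (snd C)"

definition clause_vars :: "('p, 'f, 'v) clause \<Rightarrow> 'v set" where
  "clause_vars C = (\<Union>A\<in>clause_atoms C. atom_vars A)"

definition clause_subst :: "('v \<Rightarrow> ('f, 'v) fterm) \<Rightarrow> ('p, 'f, 'v) clause \<Rightarrow> ('p, 'f, 'v) clause" where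
  "clause_subst \<sigma> C = (image_mset (atom_subst \<sigma>) (fst C), image_mset (atom_subst \<sigma>) (snd C))"

definition clauses_vars :: "('p, 'f, 'v) clause set \<Rightarrow> 'v set" where
  "clauses_vars N = (\<Union>C\<in>N. clause_vars C)"

definition clauses_preds :: "('p, 'f, 'v) clause set \<Rightarrow> 'p set" where
  "clauses_preds N = (\<Union>C\<in>N. atom_pred ` clause_atoms C)"

definition clauses_funs :: "('p, 'f, 'v) clause set \<Rightarrow> 'f set" where
  "clauses_funs N = (\<Union>C\<in>N. \<Union>A\<in>clause_atoms C. atom_funs A)"

definition grounding_on :: "'v set \<Rightarrow> ('v \<Rightarrow> ('f, 'v) fterm) \<Rightarrow> bool" where
  "grounding_on V \<sigma> \<longleftrightarrow> (\<forall>x\<in>V. ground_term (\<sigma> x))"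

definition herbrand_interp :: "('p, 'f, 'v) atom set \<Rightarrow> bool" where
  "herbrand_interp I \<longleftrightarrow> (\<forall>A\<in>I. ground_atom A)"

definition models_clause :: "('p, 'f, 'v) atom set \<Rightarrow> ('p, 'f, 'v) clause \<Rightarrow> bool" where
  "models_clause I C \<longleftrightarrow>
     (\<forall>\<sigma>. grounding_on (clause_vars C) \<sigma> \<longrightarrow>
        (set_mset (snd (clause_subst \<sigma> C)) \<inter> I \<noteq> {}
         \<or> \<not> set_mset (fst (clause_subst \<sigma> C)) \<subseteq> I))"

definition satisfiable :: "('p, 'f, 'v) clause set \<Rightarrow> bool" where
  "satisfiable N \<longleftrightarrow> (\<exists>I. herbrand_interp I \<and> (\<forall>C\<in>N. models_clause I C))"

definition conflicting_core :: "('p, 'f, 'v) clause set \<Rightarrow> bool" where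
  "conflicting_core Nb \<longleftrightarrow> finite Nb \<and>
     (\<forall>\<tau>. grounding_on (clauses_vars Nb) \<tau> \<longrightarrow> \<not> satisfiable (clause_subst \<tau> ` Nb))"

definition conflicting_core_of :: "('p, 'f, 'v) clause set \<Rightarrow> ('p, 'f, 'v) clause set \<Rightarrow> bool" where
  "conflicting_core_of Nb N \<longleftrightarrow> conflicting_core Nb \<and>
     (\<forall>C\<in>Nb. \<exists>C'\<in>N. \<exists>\<sigma>. C = clause_subst \<sigma> C')"

definition mo_clause_step :: "'p \<Rightarrow> nat \<Rightarrow> 'p \<Rightarrow> 'f \<Rightarrow> ('p, 'f, 'v) clause \<Rightarrow> ('p, 'f, 'v) clause \<Rightarrow> bool" where
  "mo_clause_step P n T fP C C' \<longleftrightarrow> 1 < n \<and>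
     (\<exists>ts. length ts = n \<and>
        ((Atom P ts \<in># fst C \<and>
          C' = (fst C - {#Atom P ts#} + {#Atom T [Fun fP ts]#}, snd C)) \<or>
         (Atom P ts \<in># snd C \<and>
          C' = (fst C, snd C - {#Atom P ts#} + {#Atom T [Fun fP ts]#}))))"

definition mo_step :: "'p \<Rightarrow> nat \<Rightarrow> 'p \<Rightarrow> 'f \<Rightarrow> ('p, 'f, 'v) clause set \<Rightarrow> ('p, 'f, 'v) clause set \<Rightarrow> bool" where
  "mo_step P n T fP N N' \<longleftrightarrow>
     (\<exists>C\<in>N. \<exists>C'. mo_clause_step P n T fP C C' \<and> N' = (N - {C}) \<union> {C'})"

end

theory Submission
  imports Defs
begin

definition bk :: "'p \<Rightarrow> 'p \<Rightarrow> 'f \<Rightarrow> nat \<Rightarrow> ('p,'f,'v) atom \<Rightarrow> ('p,'f,'v) atom" where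
  "bk P T fP n A = (if (\<exists>us. A = Atom T [Fun fP us] \<and> length us = n)
      then Atom P (THE us. A = Atom T [Fun fP us]) else A)"

definition good :: "'p \<Rightarrow> 'f \<Rightarrow> nat \<Rightarrow> ('p,'f,'v) atom \<Rightarrow> bool" where
  "good T fP n A \<longleftrightarrow> (atom_pred A = T \<longrightarrow> (\<exists>us. A = Atom T [Fun fP us] \<and> length us = n))"

definition cm :: "(('p,'f,'v) atom \<Rightarrow> ('p,'f,'v) atom) \<Rightarrow> ('p,'f,'v) clause \<Rightarrow> ('p,'f,'v) clause" where
  "cm f C = (image_mset f (fst C), image_mset f (snd C))"

lemma bk_T: "length us = n \<Longrightarrow> bk P T fP n (Atom T [Fun fP us]) = Atom P us"
  unfolding bk_def by auto

lemma bk_other: "atom_pred A \<noteq> T \<Longrightarrow> bk P T fP n A = A"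
  unfolding bk_def by auto

lemma atom_pred_subst: "atom_pred (atom_subst \<sigma> A) = atom_pred A"
  by (cases A) auto

lemma good_subst: "good T fP n A \<Longrightarrow> good T fP n (atom_subst \<sigma> A)"
  unfolding good_def by (cases A) auto

lemma bk_subst: "good T fP n A \<Longrightarrow> bk P T fP n (atom_subst \<sigma> A) = atom_subst \<sigma> (bk P T fP n A)"
proof (cases "atom_pred A = T")
  case True
  assume "good T fP n A"
  then obtain us where A: "A = Atom T [Fun fP us]" "length us = n" using True unfolding good_def by auto
  then show ?thesis by (simp add: bk_T)
next
  case False
  then show ?thesis by (simp add: bk_other atom_pred_subst)
qed

lemma bk_vars: "atom_vars (bk P T fP n A) = atom_vars A"
  unfolding bk_def by auto

lemma term_subst_ground: "term_vars t = {} \<Longrightarrow> term_subst \<sigma> t = t"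
  by (induction t) (auto intro: map_idI)

lemma term_subst_grounds: "(\<forall>x\<in>term_vars t. ground_term (\<tau> x)) \<Longrightarrow> term_vars (term_subst \<tau> t) = {}"
  by (induction t) (auto simp: ground_term_def)

lemma atom_subst_ground: "atom_vars A = {} \<Longrightarrow> atom_subst \<sigma> A = A"
  by (cases A) (auto intro: map_idI term_subst_ground)

lemma atom_subst_grounds: "(\<forall>x\<in>atom_vars A. ground_term (\<tau> x)) \<Longrightarrow> atom_vars (atom_subst \<tau> A) = {}"
  by (cases A) (auto simp: term_subst_grounds)

lemma clause_atoms_subst: "clause_atoms (clause_subst \<sigma> C) = atom_subst \<sigma> ` clause_atoms C"
  unfolding clause_atoms_def clause_subst_def by auto

lemma clause_atoms_cm: "clause_atoms (cm f C) = f ` clause_atoms C"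
  unfolding clause_atoms_def cm_def by auto

lemma clause_subst_ground: "clause_vars C = {} \<Longrightarrow> clause_subst \<sigma> C = C"
proof -
  assume "clause_vars C = {}"
  then have "\<forall>A\<in>clause_atoms C. atom_subst \<sigma> A = A"
    unfolding clause_vars_def by (auto intro: atom_subst_ground)
  then show ?thesis unfolding clause_subst_def clause_atoms_def
    by (cases C) (auto intro!: image_mset_cong[where g=id, simplified])
qed

lemma clause_subst_grounds: "grounding_on (clause_vars C) \<tau> \<Longrightarrow> clause_vars (clause_subst \<tau> C) = {}"
  unfolding clause_vars_def clause_atoms_subst grounding_on_def
  using atom_subst_grounds by fastforce

lemma cm_vars: "clause_vars (cm (bk P T fP n) C) = clause_vars C"
  unfolding clause_vars_def clause_atoms_cm by (auto simp: bk_vars)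

lemma cm_subst:
  assumes "\<forall>A\<in>clause_atoms C. good T fP n A"
  shows "cm (bk P T fP n) (clause_subst \<sigma> C) = clause_subst \<sigma> (cm (bk P T fP n) C)"
  using assms unfolding cm_def clause_subst_def clause_atoms_def
  by (auto simp: multiset.map_comp intro!: image_mset_cong bk_subst)

lemma good_clause_subst: "\<forall>A\<in>clause_atoms C. good T fP n A \<Longrightarrow> \<forall>A\<in>clause_atoms (clause_subst \<sigma> C). good T fP n A"
  unfolding clause_atoms_subst by (auto intro: good_subst)

definition Inv where
  "Inv P T fP n Nk N \<longleftrightarrow> (\<forall>C\<in>N. (\<forall>A\<in>clause_atoms C. good T fP n A) \<and> cm (bk P T fP n) C \<in> Nk)"

lemma Inv_base:
  assumes "T \<notin> clauses_preds Nk"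
  shows "Inv P T fP n Nk Nk"
  unfolding Inv_def
proof
  fix C assume C: "C \<in> Nk"
  then have np: "\<forall>A\<in>clause_atoms C. atom_pred A \<noteq> T"
    using assms unfolding clauses_preds_def by auto
  then have "\<forall>A\<in>clause_atoms C. good T fP n A" unfolding good_def by auto
  moreover have "cm (bk P T fP n) C = C"
    using np unfolding cm_def clause_atoms_def
    by (cases C) (auto intro!: image_mset_cong[where g=id, simplified] bk_other)
  ultimately show "(\<forall>A\<in>clause_atoms C. good T fP n A) \<and> cm (bk P T fP n) C \<in> Nk" using C by simp
qed

lemma Inv_step:
  assumes "1 < n" "Inv P T fP n Nk N" "mo_step P n T fP N N'"
  shows "Inv P T fP n Nk N'"
proof -
  obtain C C' where C: "C \<in> N" "mo_clause_step P n T fP C C'" "N' = (N - {C}) \<union> {C'}"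
    using assms(3) unfolding mo_step_def by auto
  obtain ts where ts: "length ts = n"
    "(Atom P ts \<in># fst C \<and> C' = (fst C - {#Atom P ts#} + {#Atom T [Fun fP ts]#}, snd C)) \<or>
     (Atom P ts \<in># snd C \<and> C' = (fst C, snd C - {#Atom P ts#} + {#Atom T [Fun fP ts]#}))"
    using C(2) unfolding mo_clause_step_def by auto
  have gC: "\<forall>A\<in>clause_atoms C. good T fP n A" and bC: "cm (bk P T fP n) C \<in> Nk"
    using assms(2) C(1) unfolding Inv_def by auto
  have inC: "Atom P ts \<in> clause_atoms C" using ts(2) unfolding clause_atoms_def by auto
  have PT: "P \<noteq> T"
  proof
    assume "P = T"
    then obtain us where "Atom P ts = Atom T [Fun fP us]" "length us = n"
      using gC inC unfolding good_def by fastforce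
    then show False using ts(1) assms(1) by auto
  qed
  have bP: "bk P T fP n (Atom P ts) = Atom P ts" using PT by (simp add: bk_other)
  have bT: "bk P T fP n (Atom T [Fun fP ts]) = Atom P ts" using ts(1) by (simp add: bk_T)
  have gT: "good T fP n (Atom T [Fun fP ts])" using ts(1) unfolding good_def by auto
  have "(\<forall>A\<in>clause_atoms C'. good T fP n A) \<and> cm (bk P T fP n) C' = cm (bk P T fP n) C"
    using ts(2)
  proof
    assume h: "Atom P ts \<in># fst C \<and> C' = (fst C - {#Atom P ts#} + {#Atom T [Fun fP ts]#}, snd C)"
    then have e: "fst C = fst C - {#Atom P ts#} + {#Atom P ts#}" by simp
    have "image_mset (bk P T fP n) (fst C) = image_mset (bk P T fP n) (fst C - {#Atom P ts#}) + {#Atom P ts#}"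
      by (subst e) (simp add: bP)
    then show ?thesis using h gC gT unfolding clause_atoms_def cm_def
      by (auto simp: bT dest: in_diffD)
  next
    assume h: "Atom P ts \<in># snd C \<and> C' = (fst C, snd C - {#Atom P ts#} + {#Atom T [Fun fP ts]#})"
    then have e: "snd C = snd C - {#Atom P ts#} + {#Atom P ts#}" by simp
    have "image_mset (bk P T fP n) (snd C) = image_mset (bk P T fP n) (snd C - {#Atom P ts#}) + {#Atom P ts#}"
      by (subst e) (simp add: bP)
    then show ?thesis using h gC gT unfolding clause_atoms_def cm_def
      by (auto simp: bT dest: in_diffD)
  qed
  then show ?thesis using assms(2) C bC unfolding Inv_def by auto
qed

theorem lemma4:
  fixes P T :: 'p and fP :: 'f and n :: nat
    and Nk Nkl Nb :: "('p, 'f, 'v) clause set"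
  assumes "1 < n"
    and fresh_T: "T \<notin> clauses_preds Nk"
    and fresh_f: "fP \<notin> clauses_funs Nk"
    and steps: "(mo_step P n T fP)\<^sup>*\<^sup>* Nk Nkl"
    and all_removed: "P \<notin> clauses_preds Nkl"
    and core: "conflicting_core_of Nb Nkl"
  shows "\<exists>Nb'. conflicting_core_of Nb' Nk"
proof -
  let ?b = "bk P T fP n"
  have inv: "Inv P T fP n Nk Nkl"
    using steps
  proof (induction rule: rtranclp_induct)
    case base then show ?case using Inv_base[OF fresh_T] .
  next
    case (step y z) show ?case using Inv_step[OF assms(1) step.IH step.hyps(2)] .
  qed
  have fin: "finite Nb" and unsat: "\<And>\<tau>. grounding_on (clauses_vars Nb) \<tau> \<Longrightarrow> \<not> satisfiable (clause_subst \<tau> ` Nb)"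
    and inst: "\<forall>C\<in>Nb. \<exists>C'\<in>Nkl. \<exists>\<sigma>. C = clause_subst \<sigma> C'"
    using core unfolding conflicting_core_of_def conflicting_core_def by auto
  have gNb: "\<forall>D\<in>Nb. \<forall>A\<in>clause_atoms D. good T fP n A"
    using inst inv unfolding Inv_def by (metis good_clause_subst)
  define Nb' where "Nb' = cm ?b ` Nb"
  have vars: "clauses_vars Nb' = clauses_vars Nb"
    unfolding Nb'_def clauses_vars_def by (simp add: cm_vars)
  have "conflicting_core_of Nb' Nk"
    unfolding conflicting_core_of_def conflicting_core_def
  proof (intro conjI allI impI ballI)
    show "finite Nb'" using fin Nb'_def by simp
  next
    fix D' assume "D' \<in> Nb'"
    then obtain D where D: "D \<in> Nb" "D' = cm ?b D" unfolding Nb'_def by auto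
    then obtain C' \<sigma> where C': "C' \<in> Nkl" "D = clause_subst \<sigma> C'" using inst by auto
    have "\<forall>A\<in>clause_atoms C'. good T fP n A" "cm ?b C' \<in> Nk" using inv C'(1) unfolding Inv_def by auto
    then show "\<exists>C'\<in>Nk. \<exists>\<sigma>. D' = clause_subst \<sigma> C'"
      using D C' cm_subst by metis
  next
    fix \<tau> :: "'v \<Rightarrow> ('f,'v) fterm" assume gr: "grounding_on (clauses_vars Nb') \<tau>"
    then have gr': "grounding_on (clauses_vars Nb) \<tau>" using vars by simp
    show "\<not> satisfiable (clause_subst \<tau> ` Nb')"
    proof
      assume "satisfiable (clause_subst \<tau> ` Nb')"
      then obtain I where I: "\<forall>C\<in>clause_subst \<tau> ` Nb'. models_clause I C"
        unfolding satisfiable_def by auto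
      define I' where "I' = {A. ground_atom A \<and> ?b A \<in> I}"
      have "satisfiable (clause_subst \<tau> ` Nb)"
        unfolding satisfiable_def
      proof (intro exI conjI ballI)
        show "herbrand_interp I'" unfolding herbrand_interp_def I'_def by auto
      next
        fix E assume "E \<in> clause_subst \<tau> ` Nb"
        then obtain D where D: "D \<in> Nb" "E = clause_subst \<tau> D" by auto
        have "grounding_on (clause_vars D) \<tau>"
          using gr' D(1) unfolding grounding_on_def clauses_vars_def by auto
        then have Eg: "clause_vars E = {}" using D(2) clause_subst_grounds by blast
        have eq: "cm ?b E = clause_subst \<tau> (cm ?b D)" using D gNb cm_subst by metis
        then have "models_clause I (cm ?b E)" using I D(1) unfolding Nb'_def by auto
        moreover have Eg2: "clause_vars (cm ?b E) = {}" using Eg cm_vars by metis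
        ultimately have m: "set_mset (snd (cm ?b E)) \<inter> I \<noteq> {} \<or> \<not> set_mset (fst (cm ?b E)) \<subseteq> I"
          unfolding models_clause_def
          by (metis clause_subst_ground empty_iff grounding_on_def)
        have gA: "\<forall>A\<in>clause_atoms E. ground_atom A"
          using Eg unfolding clause_vars_def ground_atom_def by auto
        have "set_mset (snd E) \<inter> I' \<noteq> {} \<or> \<not> set_mset (fst E) \<subseteq> I'"
          using m gA unfolding cm_def I'_def clause_atoms_def by auto
        then show "models_clause I' E"
          unfolding models_clause_def using clause_subst_ground[OF Eg] by simp
      qed
      then show False using unsat[OF gr'] by simp
    qed
  qed
  then show ?thesis by blast
qed

end
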